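(* Let $\mathcal{H}_O\simeq\mathbb{C}^{d_O}$ and $\mathcal{H}_R\simeq\mathbb{C}^{d_R}$. Let $H_R=\sum_{m=1}^{d_R}\lambda_m^{\uparrow}|\xi_m\rangle\langle\xi_m|$ with $\lambda_1^\uparrow\leqslant\dots\leqslant\lambda_{d_R}^\uparrow$ and $\{|\xi_m\rangle\}$ an orthonormal basis of $\mathcal{H}_R$; let $\beta\in(0,\infty)$ and $\rho_R(\beta)=e^{-\beta H_R}/\mathrm{tr}[e^{-\beta H_R}]=\sum_m r_m^{\downarrow}|\xi_m\rangle\langle\xi_m|$. Let $\rho_O=\sum_{l=1}^{d_O}o_l^{\downarrow}|\varphi_l\rangle\langle\varphi_l|$ be a density operator on $\mathcal{H}_O$ with $o_1^\downarrow\geqslant\dots\geqslant o_{d_O}^\downarrow$ and $\{|\varphi_l\rangle\}$ an orthonormal basis. Write $\rho=\rho_O\otimes\rho_R(\beta)=\sum_{n=1}^{d_Od_R}p_n^{\downarrow}|\psi_n\rangle\langle\psi_n|$, where $(p_n^\downarrow)_n$ is the non-increasing rearrangement of $(o_l^\downarrow r_m^\downarrow)_{l,m}$ and $(|\psi_n\rangle)_n$ the correspondingly rearranged family $(|\varphi_l\rangle\otimes|\xi_m\rangle)_{l,m}$. For a unitary $U$ on $\mathcal{H}_O\otimes\mathcal{H}_R$ define the heat $\Delta Q(U)=\mathrm{tr}[H_R(\mathrm{tr}_O[U\rho U^\dagger]-\rho_R(\beta))]$. Suppose $U_{\mathrm{maj}}^f$ is a unitary such that, for every $m\in\{1,\dots,d_R\}$,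 there is an orthonormal basis $\{|\varphi_l^m\rangle\}_{l=1}^{d_O}$ of $\mathcal{H}_O$ with $$U_{\mathrm{maj}}^f|\psi_{(m-1)d_O+l}\rangle=|\varphi_l^m\rangle\otimes|\xi_m\rangle\quad\text{for all } l\in\{1,\dots,d_O\}.$$ Then $\Delta Q(U_{\mathrm{maj}}^f)\leqslant\Delta Q(U)$ for every unitary $U$ on $\mathcal{H}_O\otimes\mathcal{H}_R$.
   Context: $\mathrm{tr}_O$ denotes the partial trace over $\mathcal{H}_O$. *)

theory Defs
  imports Complex_Main "Jordan_Normal_Form.Matrix"
begin

text \<open>Indices are 0-based. Composite index convention:
  the basis vector e_i (x) e_j of C^a (x) C^b has index i * b + j (Kronecker).\<close>

definition cinner :: "complex vec \<Rightarrow> complex vec \<Rightarrow> complex" where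
  "cinner u v = (\<Sum>i<dim_vec u. cnj (u $ i) * v $ i)"

definition orthonormal_basis :: "nat \<Rightarrow> (nat \<Rightarrow> complex vec) \<Rightarrow> bool" where
  "orthonormal_basis d f \<longleftrightarrow>
     (\<forall>i<d. f i \<in> carrier_vec d) \<and>
     (\<forall>i<d. \<forall>j<d. cinner (f i) (f j) = (if i = j then 1 else 0))"

definition ket_bra :: "complex vec \<Rightarrow> complex vec \<Rightarrow> complex mat" where
  "ket_bra u v = mat (dim_vec u) (dim_vec v) (\<lambda>(i,j). u $ i * cnj (v $ j))"

definition adj :: "complex mat \<Rightarrow> complex mat" where
  "adj M = mat (dim_col M) (dim_row M) (\<lambda>(i,j). cnj (M $$ (j,i)))"

definition unitary_mat :: "nat \<Rightarrow> complex mat \<Rightarrow> bool" where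
  "unitary_mat d U \<longleftrightarrow> U \<in> carrier_mat d d \<and> adj U * U = 1\<^sub>m d \<and> U * adj U = 1\<^sub>m d"

definition tensor_vec :: "complex vec \<Rightarrow> complex vec \<Rightarrow> complex vec" where
  "tensor_vec a b = vec (dim_vec a * dim_vec b)
     (\<lambda>k. a $ (k div dim_vec b) * b $ (k mod dim_vec b))"

definition tensor_mat :: "complex mat \<Rightarrow> complex mat \<Rightarrow> complex mat" where
  "tensor_mat A B = mat (dim_row A * dim_row B) (dim_col A * dim_col B)
     (\<lambda>(i,j). A $$ (i div dim_row B, j div dim_col B) * B $$ (i mod dim_row B, j mod dim_col B))"

definition ptrace_O :: "nat \<Rightarrow> nat \<Rightarrow> complex mat \<Rightarrow> complex mat" where
  "ptrace_O dO dR M = mat dR dR (\<lambda>(i,j). \<Sum>k<dO. M $$ (k * dR + i, k * dR + j))"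

definition spec_sum :: "nat \<Rightarrow> (nat \<Rightarrow> real) \<Rightarrow> (nat \<Rightarrow> complex vec) \<Rightarrow> complex mat" where
  "spec_sum d c v = mat d d (\<lambda>(i,j). \<Sum>m<d. complex_of_real (c m) * (ket_bra (v m) (v m)) $$ (i,j))"

text \<open>Gibbs state exp(-beta H)/tr exp(-beta H) of H = sum lam m |xi m><xi m|,
  computed by functional calculus on the spectral decomposition.\<close>
definition gibbs_weights :: "nat \<Rightarrow> real \<Rightarrow> (nat \<Rightarrow> real) \<Rightarrow> nat \<Rightarrow> real" where
  "gibbs_weights d \<beta> lam m = exp (- \<beta> * lam m) / (\<Sum>k<d. exp (- \<beta> * lam k))"

definition mtrace :: "complex mat \<Rightarrow> complex" where
  "mtrace M = (\<Sum>i<dim_row M. M $$ (i,i))"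

definition heat :: "nat \<Rightarrow> nat \<Rightarrow> complex mat \<Rightarrow> complex mat \<Rightarrow> complex mat \<Rightarrow> complex mat \<Rightarrow> real" where
  "heat dO dR HR rhoR rho U = Re (mtrace (HR * (ptrace_O dO dR (U * rho * adj U) - rhoR)))"

end

theory Submission
  imports Defs "Jordan_Normal_Form.Determinant"
begin


lemma div_eq_iff_range: "(0::nat) < d \<Longrightarrow> (n div d = m) \<longleftrightarrow> (m*d \<le> n \<and> n < m*d + d)"
  by (metis add.commute div_nat_eqI dividend_less_div_times mult.commute
    mult_Suc times_div_less_eq_dividend)

lemma abel_nonneg:
  fixes p c :: "nat \<Rightarrow> real"
  assumes ps: "\<And>n. Suc n < K \<Longrightarrow> p (Suc n) \<le> p n"
    and S: "\<And>k. k \<le> K \<Longrightarrow> (\<Sum>n<k. c n) \<ge> 0"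
    and SK: "(\<Sum>n<K. c n) = 0"
  shows "(\<Sum>n<K. p n * c n) \<ge> 0"
proof -
  have claim: "Suc k \<le> K \<Longrightarrow> (\<Sum>n<Suc k. p n * c n) \<ge> p k * (\<Sum>n<Suc k. c n)" for k
  proof (induction k)
    case 0 then show ?case by simp
  next
    case (Suc k)
    have IH: "(\<Sum>n<Suc k. p n * c n) \<ge> p k * (\<Sum>n<Suc k. c n)" using Suc by simp
    have "p (Suc k) * (\<Sum>n<Suc k. c n) \<le> p k * (\<Sum>n<Suc k. c n)"
      using ps[of k] S[of "Suc k"] Suc.prems by (intro mult_right_mono) auto
    then show ?case using IH by (simp add: algebra_simps)
  qed
  show ?thesis
  proof (cases K)
    case 0 then show ?thesis by simp
  next
    case (Suc k) then show ?thesis using claim[of k] SK by simp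
  qed
qed

lemma partial_ineq:
  fixes lam :: "nat \<Rightarrow> real" and D :: "nat \<Rightarrow> nat \<Rightarrow> real"
  assumes dO: "dO \<ge> 1" and dR: "dR \<ge> 1"
    and lam_sorted: "\<And>m m'. m \<le> m' \<Longrightarrow> m' < dR \<Longrightarrow> lam m \<le> lam m'"
    and Dnn: "\<And>n m. n < dO*dR \<Longrightarrow> m < dR \<Longrightarrow> D n m \<ge> 0"
    and row: "\<And>n. n < dO*dR \<Longrightarrow> (\<Sum>m<dR. D n m) = 1"
    and col: "\<And>m. m < dR \<Longrightarrow> (\<Sum>n<dO*dR. D n m) = real dO"
    and k: "k \<le> dO*dR"
  shows "(\<Sum>n<k. lam (n div dO)) \<le> (\<Sum>n<k. \<Sum>m<dR. lam m * D n m)"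
    and "k = dO*dR \<Longrightarrow> (\<Sum>n<k. lam (n div dO)) = (\<Sum>n<k. \<Sum>m<dR. lam m * D n m)"
proof -
  define E where "E n m = (if n div dO = m then (1::real) else 0)" for n m
  define x where "x m = (\<Sum>n<k. D n m)" for m
  define y where "y m = (\<Sum>n<k. E n m)" for m
  have d0: "0 < dO" using dO by simp
  have lhs: "(\<Sum>n<k. lam (n div dO)) = (\<Sum>m<dR. lam m * y m)"
  proof -
    have "(\<Sum>n<k. lam (n div dO)) = (\<Sum>n<k. \<Sum>m<dR. lam m * E n m)"
    proof (rule sum.cong[OF refl])
      fix n assume "n \<in> {..<k}"
      then have "n div dO < dR" using k d0
        by (simp add: div_less_iff_less_mult mult.commute)
      then show "lam (n div dO) = (\<Sum>m<dR. lam m * E n m)"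
        by (simp add: E_def if_distrib sum.delta cong: if_cong)
    qed
    also have "\<dots> = (\<Sum>m<dR. lam m * y m)"
      unfolding y_def by (subst sum.swap) (simp add: sum_distrib_left)
    finally show ?thesis .
  qed
  have rhs: "(\<Sum>n<k. \<Sum>m<dR. lam m * D n m) = (\<Sum>m<dR. lam m * x m)"
    unfolding x_def by (subst sum.swap) (simp add: sum_distrib_left)
  have sx: "(\<Sum>m<dR. x m) = real k"
    unfolding x_def using k row by (subst sum.swap) simp
  have sy: "(\<Sum>m<dR. y m) = real k"
  proof -
    have "(\<Sum>m<dR. y m) = (\<Sum>n<k. \<Sum>m<dR. E n m)" unfolding y_def by (rule sum.swap)
    also have "\<dots> = (\<Sum>n<k. 1)"
    proof (rule sum.cong[OF refl])
      fix n assume "n \<in> {..<k}"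
      then have "n div dO < dR" using k d0
        by (simp add: div_less_iff_less_mult mult.commute)
      then show "(\<Sum>m<dR. E n m) = 1" by (simp add: E_def)
    qed
    finally show ?thesis by simp
  qed
  have xle: "0 \<le> x m \<and> x m \<le> real dO" if "m < dR" for m
  proof -
    have "x m \<le> (\<Sum>n<dO*dR. D n m)" unfolding x_def
      using k that Dnn by (intro sum_mono2) auto
    moreover have "0 \<le> x m" unfolding x_def using k that Dnn by (intro sum_nonneg) auto
    ultimately show ?thesis using col[OF that] by simp
  qed
  have cardy: "y m = real (card ({..<k} \<inter> {n. n div dO = m}))" for m
    unfolding y_def E_def by (simp add: sum.If_cases)
  have ylow: "y m = real dO" if "m < k div dO" for m
  proof -
    have "(m+1)*dO \<le> (k div dO)*dO" using that by (intro mult_right_mono) auto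
    also have "\<dots> \<le> k" by simp
    finally have mk: "m*dO + dO \<le> k" by simp
    have "{..<k} \<inter> {n. n div dO = m} = {m*dO..<m*dO+dO}"
      using mk by (auto simp: div_eq_iff_range[OF d0])
    then show ?thesis by (simp add: cardy)
  qed
  have yhigh: "y m = 0" if "m > k div dO" for m
  proof -
    have "{..<k} \<inter> {n. n div dO = m} = {}"
      using that div_le_mono[of _ k dO] by (auto) (metis leD less_imp_le_nat)
    then show ?thesis by (simp add: cardy)
  qed
  define t where "t = lam (min (k div dO) (dR - 1))"
  have diff: "(\<Sum>m<dR. lam m * x m) - (\<Sum>m<dR. lam m * y m) = (\<Sum>m<dR. (lam m - t) * (x m - y m))"
  proof -
    have "(\<Sum>m<dR. (lam m - t) * (x m - y m)) = (\<Sum>m<dR. lam m * x m) - (\<Sum>m<dR. lam m * y m) - t * ((\<Sum>m<dR. x m) - (\<Sum>m<dR. y m))"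
      by (simp add: left_diff_distrib right_diff_distrib sum_subtractf sum_distrib_left)
    then show ?thesis using sx sy by simp
  qed
  have tm: "(lam m - t) * (x m - y m) \<ge> 0" if m: "m < dR" for m
  proof -
    consider "m < k div dO" | "m = k div dO" | "m > k div dO" by linarith
    then show ?thesis
    proof cases
      case 1
      then have "lam m \<le> t" unfolding t_def using m by (intro lam_sorted) auto
      moreover have "x m \<le> y m" using ylow[OF 1] xle[OF m] by simp
      ultimately show ?thesis by (simp add: mult_nonpos_nonpos)
    next
      case 2
      then have "t = lam m" unfolding t_def using m by (simp add: min_def)
      then show ?thesis by simp
    next
      case 3
      then have "t \<le> lam m" unfolding t_def using m by (intro lam_sorted) auto
      moreover have "y m \<le> x m" using yhigh[OF 3] xle[OF m] by simp
      ultimately show ?thesis by simp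
    qed
  qed
  show "(\<Sum>n<k. lam (n div dO)) \<le> (\<Sum>n<k. \<Sum>m<dR. lam m * D n m)"
    using diff tm lhs rhs sum_nonneg[of "{..<dR}" "\<lambda>m. (lam m - t) * (x m - y m)"] by simp
  assume kN: "k = dO*dR"
  have "x m = y m" if m: "m < dR" for m
  proof -
    have "m < k div dO" using kN m d0 by simp
    then show ?thesis using ylow col[OF m] kN unfolding x_def by simp
  qed
  then show "(\<Sum>n<k. lam (n div dO)) = (\<Sum>n<k. \<Sum>m<dR. lam m * D n m)"
    using lhs rhs by simp
qed

lemma comb_main:
  fixes lam p :: "nat \<Rightarrow> real" and D :: "nat \<Rightarrow> nat \<Rightarrow> real"
  assumes dO: "dO \<ge> 1" and dR: "dR \<ge> 1"
    and lam_sorted: "\<And>m m'. m \<le> m' \<Longrightarrow> m' < dR \<Longrightarrow> lam m \<le> lam m'"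
    and p_sorted: "\<And>n n'. n \<le> n' \<Longrightarrow> n' < dO*dR \<Longrightarrow> p n' \<le> p n"
    and Dnn: "\<And>n m. n < dO*dR \<Longrightarrow> m < dR \<Longrightarrow> D n m \<ge> 0"
    and row: "\<And>n. n < dO*dR \<Longrightarrow> (\<Sum>m<dR. D n m) = 1"
    and col: "\<And>m. m < dR \<Longrightarrow> (\<Sum>n<dO*dR. D n m) = real dO"
  shows "(\<Sum>n<dO*dR. p n * lam (n div dO)) \<le> (\<Sum>n<dO*dR. p n * (\<Sum>m<dR. lam m * D n m))"
proof -
  define c where "c n = (\<Sum>m<dR. lam m * D n m) - lam (n div dO)" for n
  have "(\<Sum>n<dO*dR. p n * c n) \<ge> 0"
  proof (rule abel_nonneg)
    show "p (Suc n) \<le> p n" if "Suc n < dO*dR" for n using p_sorted that by simp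
    show "0 \<le> (\<Sum>n<k. c n)" if "k \<le> dO*dR" for k
    proof -
      have "(\<Sum>n<k. lam (n div dO)) \<le> (\<Sum>n<k. \<Sum>m<dR. lam m * D n m)"
        by (rule partial_ineq(1)[where lam=lam and D=D and dO=dO and dR=dR and k=k]) (use assms that in auto)
      then show ?thesis unfolding c_def by (simp add: sum_subtractf)
    qed
    show "(\<Sum>n<dO*dR. c n) = 0"
    proof -
      have "(\<Sum>n<dO*dR. lam (n div dO)) = (\<Sum>n<dO*dR. \<Sum>m<dR. lam m * D n m)"
        by (rule partial_ineq(2)[where lam=lam and D=D and dO=dO and dR=dR and k="dO*dR"]) (use assms in auto)
      then show ?thesis unfolding c_def by (simp add: sum_subtractf)
    qed
  qed
  then show ?thesis unfolding c_def by (simp add: algebra_simps sum_subtractf)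
qed



lemma adj_index[simp]: "i < dim_col M \<Longrightarrow> j < dim_row M \<Longrightarrow> adj M $$ (i,j) = cnj (M $$ (j,i))"
  "dim_row (adj M) = dim_col M" "dim_col (adj M) = dim_row M"
  by (auto simp: adj_def)

lemma onb_dim: "orthonormal_basis d f \<Longrightarrow> i < d \<Longrightarrow> dim_vec (f i) = d"
  by (auto simp: orthonormal_basis_def)

lemma onb_inner: "orthonormal_basis d f \<Longrightarrow> i < d \<Longrightarrow> j < d \<Longrightarrow>
   (\<Sum>a<d. cnj (f i $ a) * f j $ a) = (if i = j then 1 else 0)"
proof -
  assume f: "orthonormal_basis d f" and i: "i < d" and j: "j < d"
  then have "cinner (f i) (f j) = (if i = j then 1 else 0)" "dim_vec (f i) = d"
    by (auto simp: orthonormal_basis_def)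
  then show ?thesis by (simp add: cinner_def)
qed

lemma onb_complete:
  assumes f: "orthonormal_basis d f" and i: "i < d" and j: "j < d"
  shows "(\<Sum>m<d. f m $ i * cnj (f m $ j)) = (if i = j then 1 else 0)"
proof -
  define X where "X = mat d d (\<lambda>(i,m). f m $ i)"
  have X: "X \<in> carrier_mat d d" unfolding X_def by simp
  have aX: "adj X \<in> carrier_mat d d" using X by (simp add: adj_def)
  have "adj X * X = 1\<^sub>m d"
  proof (rule eq_matI)
    fix a b assume ab: "a < dim_row (1\<^sub>m d)" "b < dim_col (1\<^sub>m d)"
    then have "(adj X * X) $$ (a,b) = (\<Sum>c<d. cnj (f a $ c) * f b $ c)"
      using X by (simp add: scalar_prod_def X_def atLeast0LessThan)
    also have "\<dots> = 1\<^sub>m d $$ (a,b)" using onb_inner[OF f] ab by simp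
    finally show "(adj X * X) $$ (a,b) = 1\<^sub>m d $$ (a,b)" .
  qed (use X in auto)
  then have "X * adj X = 1\<^sub>m d" by (rule mat_mult_left_right_inverse[OF aX X])
  then have "(X * adj X) $$ (i,j) = 1\<^sub>m d $$ (i,j)" by simp
  then show ?thesis using X i j by (simp add: scalar_prod_def X_def atLeast0LessThan)
qed

lemma parseval:
  fixes f :: "nat \<Rightarrow> nat \<Rightarrow> complex" and w :: "nat \<Rightarrow> complex"
  assumes h: "\<And>a b. a < d \<Longrightarrow> b < d \<Longrightarrow> (\<Sum>n<K. cnj (f n a) * f n b) = (if a = b then 1 else 0)"
  shows "(\<Sum>n<K. (cmod (\<Sum>a<d. cnj (f n a) * w a))^2) = (\<Sum>a<d. (cmod (w a))^2)"
proof -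
  have "complex_of_real (\<Sum>n<K. (cmod (\<Sum>a<d. cnj (f n a) * w a))^2)
     = (\<Sum>n<K. (\<Sum>a<d. cnj (f n a) * w a) * cnj (\<Sum>b<d. cnj (f n b) * w b))"
    by (simp only: of_real_sum complex_norm_square)
  also have "\<dots> = (\<Sum>n<K. \<Sum>b<d. \<Sum>a<d. w a * cnj (w b) * (cnj (f n a) * f n b))"
    by (simp add: sum_distrib_left sum_distrib_right cnj_sum mult_ac)
  also have "\<dots> = (\<Sum>b<d. \<Sum>a<d. \<Sum>n<K. w a * cnj (w b) * (cnj (f n a) * f n b))"
    by (subst sum.swap, rule sum.cong[OF refl], rule sum.swap)
  also have "\<dots> = (\<Sum>b<d. \<Sum>a<d. w a * cnj (w b) * (if a = b then 1 else 0))"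
    by (intro sum.cong refl) (simp add: h sum_distrib_left[symmetric])
  also have "\<dots> = (\<Sum>a<d. w a * cnj (w a))"
    by (simp add: if_distrib cong: if_cong)
  also have "\<dots> = complex_of_real (\<Sum>a<d. (cmod (w a))^2)"
    by (simp only: of_real_sum complex_norm_square)
  finally show ?thesis using of_real_eq_iff by blast
qed

lemma sum_split_mult:
  fixes h :: "nat \<Rightarrow> 'a::comm_monoid_add"
  shows "(\<Sum>k<a. \<Sum>j<b. h (k*b+j)) = (\<Sum>x<a*b. h x)"
proof -
  have "(\<Sum>j<b. h (k*b+j)) = (\<Sum>x\<in>{k*b..<k*b+b}. h x)" for k
  proof -
    have "(\<Sum>x\<in>{k*b..<k*b+b}. h x) = (\<Sum>x\<in>{0+k*b..<b+k*b}. h x)" by (simp add: add.commute)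
    also have "\<dots> = (\<Sum>j\<in>{0..<b}. h (j+k*b))" by (rule sum.shift_bounds_nat_ivl)
    finally show ?thesis by (simp add: atLeast0LessThan add.commute)
  qed
  then show ?thesis by (simp add: sum.nat_group)
qed

lemma sum5_perm: "(\<Sum>i\<in>I. \<Sum>j\<in>J. \<Sum>m\<in>M. \<Sum>k\<in>K. \<Sum>n\<in>N. F i j m k n) = (\<Sum>n\<in>N. \<Sum>m\<in>M. \<Sum>k\<in>K. \<Sum>j\<in>J. \<Sum>i\<in>I. F i j m k n)"
proof -
  have "(\<Sum>i\<in>I. \<Sum>j\<in>J. \<Sum>m\<in>M. \<Sum>k\<in>K. \<Sum>n\<in>N. F i j m k n) = (\<Sum>j\<in>J. \<Sum>m\<in>M. \<Sum>k\<in>K. \<Sum>n\<in>N. \<Sum>i\<in>I. F i j m k n)"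
    by (subst sum.swap, rule sum.cong[OF refl], subst sum.swap, rule sum.cong[OF refl], subst sum.swap, rule sum.cong[OF refl], rule sum.swap)
  also have "\<dots> = (\<Sum>m\<in>M. \<Sum>k\<in>K. \<Sum>n\<in>N. \<Sum>j\<in>J. \<Sum>i\<in>I. F i j m k n)"
    by (subst sum.swap, rule sum.cong[OF refl], subst sum.swap, rule sum.cong[OF refl], rule sum.swap)
  also have "\<dots> = (\<Sum>n\<in>N. \<Sum>m\<in>M. \<Sum>k\<in>K. \<Sum>j\<in>J. \<Sum>i\<in>I. F i j m k n)"
    by (subst sum.swap, rule sum.cong[OF refl], rule sum.swap[symmetric])
  finally show ?thesis .
qed

lemma sum5_perm2: "(\<Sum>i\<in>I. \<Sum>j\<in>J. \<Sum>k\<in>K. \<Sum>n\<in>N. \<Sum>m\<in>M. F i j m k n) = (\<Sum>n\<in>N. \<Sum>m\<in>M. \<Sum>k\<in>K. \<Sum>j\<in>J. \<Sum>i\<in>I. F i j m k n)"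
proof -
  have "(\<Sum>i\<in>I. \<Sum>j\<in>J. \<Sum>k\<in>K. \<Sum>n\<in>N. \<Sum>m\<in>M. F i j m k n) = (\<Sum>j\<in>J. \<Sum>k\<in>K. \<Sum>n\<in>N. \<Sum>m\<in>M. \<Sum>i\<in>I. F i j m k n)"
    by (subst sum.swap, rule sum.cong[OF refl], subst sum.swap, rule sum.cong[OF refl], subst sum.swap, rule sum.cong[OF refl], rule sum.swap)
  also have "\<dots> = (\<Sum>k\<in>K. \<Sum>n\<in>N. \<Sum>m\<in>M. \<Sum>j\<in>J. \<Sum>i\<in>I. F i j m k n)"
    by (subst sum.swap, rule sum.cong[OF refl], subst sum.swap, rule sum.cong[OF refl], rule sum.swap)
  also have "\<dots> = (\<Sum>n\<in>N. \<Sum>k\<in>K. \<Sum>m\<in>M. \<Sum>j\<in>J. \<Sum>i\<in>I. F i j m k n)"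
    by (rule sum.swap)
  also have "\<dots> = (\<Sum>n\<in>N. \<Sum>m\<in>M. \<Sum>k\<in>K. \<Sum>j\<in>J. \<Sum>i\<in>I. F i j m k n)"
    by (rule sum.cong[OF refl], rule sum.swap)
  finally show ?thesis .
qed

lemma tensor_vec_index: "i < dim_vec a * dim_vec b \<Longrightarrow>
    tensor_vec a b $ i = a $ (i div dim_vec b) * b $ (i mod dim_vec b)"
  "dim_vec (tensor_vec a b) = dim_vec a * dim_vec b"
  by (auto simp: tensor_vec_def)

lemma spec_sum_index:
  assumes "orthonormal_basis d f" "i < d" "j < d"
  shows "spec_sum d c f $$ (i,j) = (\<Sum>m<d. complex_of_real (c m) * (f m $ i * cnj (f m $ j)))"
    "spec_sum d c f \<in> carrier_mat d d"
  using assms onb_dim[OF assms(1)] by (auto simp: spec_sum_def ket_bra_def intro!: sum.cong)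

lemma spec_sum_carrier: "spec_sum d c f \<in> carrier_mat d d" by (simp add: spec_sum_def)

lemma mtrace_mult:
  assumes "A \<in> carrier_mat d d" "B \<in> carrier_mat d d"
  shows "mtrace (A * B) = (\<Sum>i<d. \<Sum>j<d. A $$ (i,j) * B $$ (j,i))"
  using assms by (auto simp: mtrace_def scalar_prod_def atLeast0LessThan intro!: sum.cong)

definition Dw :: "nat \<Rightarrow> nat \<Rightarrow> (nat \<Rightarrow> complex vec) \<Rightarrow> complex vec \<Rightarrow> nat \<Rightarrow> real" where
  "Dw dO dR xi v m = (\<Sum>k<dO. (cmod (\<Sum>j<dR. cnj (xi m $ j) * v $ (k*dR+j)))^2)"

lemma trace_formula:
  fixes p lam :: "nat \<Rightarrow> real" and v :: "nat \<Rightarrow> complex vec"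
  assumes xi: "orthonormal_basis dR xi"
    and M: "\<And>a b. a < dO*dR \<Longrightarrow> b < dO*dR \<Longrightarrow>
       M $$ (a,b) = (\<Sum>n<K. complex_of_real (p n) * (v n $ a * cnj (v n $ b)))"
  shows "mtrace (spec_sum dR lam xi * ptrace_O dO dR M)
     = complex_of_real (\<Sum>n<K. p n * (\<Sum>m<dR. lam m * Dw dO dR xi (v n) m))"
proof -
  define F where "F i j m k n = complex_of_real (lam m) * complex_of_real (p n) *
     (xi m $ i * cnj (xi m $ j) * (v n $ (k*dR+j) * cnj (v n $ (k*dR+i))))" for i j m k n
  have P: "ptrace_O dO dR M \<in> carrier_mat dR dR" by (simp add: ptrace_O_def)
  have idx: "k*dR+j < dO*dR" if "k < dO" "j < dR" for k j
  proof -
    have "k*dR+j < k*dR + dR" using that by simp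
    also have "\<dots> = Suc k * dR" by simp
    also have "\<dots> \<le> dO*dR" using that by (intro mult_right_mono) auto
    finally show ?thesis .
  qed
  have "mtrace (spec_sum dR lam xi * ptrace_O dO dR M) =
     (\<Sum>i<dR. \<Sum>j<dR. (\<Sum>m<dR. complex_of_real (lam m) * (xi m $ i * cnj (xi m $ j))) *
        (\<Sum>k<dO. \<Sum>n<K. complex_of_real (p n) * (v n $ (k*dR+j) * cnj (v n $ (k*dR+i)))))"
    unfolding mtrace_mult[OF spec_sum_carrier P]
    by (intro sum.cong refl arg_cong2[where f="(*)"]) (auto simp: spec_sum_index[OF xi] ptrace_O_def M idx)
  also have "\<dots> = (\<Sum>i<dR. \<Sum>j<dR. \<Sum>k<dO. \<Sum>n<K. \<Sum>m<dR. F i j m k n)"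
    by (simp add: F_def sum_distrib_left sum_distrib_right mult_ac)
  also have "\<dots> = (\<Sum>n<K. \<Sum>m<dR. \<Sum>k<dO. \<Sum>j<dR. \<Sum>i<dR. F i j m k n)"
    by (rule sum5_perm2)
  also have "\<dots> = complex_of_real (\<Sum>n<K. p n * (\<Sum>m<dR. lam m * Dw dO dR xi (v n) m))"
  proof -
    have "complex_of_real (\<Sum>n<K. p n * (\<Sum>m<dR. lam m * Dw dO dR xi (v n) m)) =
      (\<Sum>n<K. complex_of_real (p n) * (\<Sum>m<dR. complex_of_real (lam m) * (\<Sum>k<dO.
         (\<Sum>j<dR. cnj (xi m $ j) * v n $ (k*dR+j)) * cnj (\<Sum>i<dR. cnj (xi m $ i) * v n $ (k*dR+i)))))"
      by (simp only: Dw_def of_real_sum of_real_mult complex_norm_square)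
    also have "\<dots> = (\<Sum>n<K. \<Sum>m<dR. \<Sum>k<dO. \<Sum>j<dR. \<Sum>i<dR. F i j m k n)"
      by (simp add: F_def sum_distrib_left sum_distrib_right cnj_sum mult_ac)
    finally show ?thesis by simp
  qed
  finally show ?thesis .
qed

lemma onb_norm: assumes "orthonormal_basis d f" "i < d"
  shows "(\<Sum>a<d. (cmod (f i $ a))^2) = 1"
proof -
  have "complex_of_real (\<Sum>a<d. (cmod (f i $ a))^2) = (\<Sum>a<d. cnj (f i $ a) * f i $ a)"
    by (simp only: of_real_sum complex_norm_square mult.commute)
  also have "\<dots> = 1" using onb_inner[OF assms(1,2,2)] by simp
  finally show ?thesis by (metis of_real_1 of_real_eq_iff)
qed

lemma onb_complete': assumes "orthonormal_basis d f" "i < d" "j < d"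
  shows "(\<Sum>m<d. cnj (f m $ i) * f m $ j) = (if i = j then 1 else 0)"
  using onb_complete[OF assms(1,3,2)] by (simp add: mult.commute eq_commute)

lemma idx_lt: "k < dO \<Longrightarrow> j < dR \<Longrightarrow> k*dR+j < dO*(dR::nat)"
proof -
  assume that: "k < dO" "j < dR"
  have "k*dR+j < k*dR + dR" using that by simp
  also have "\<dots> = Suc k * dR" by simp
  also have "\<dots> \<le> dO*dR" using that by (intro mult_right_mono) auto
  finally show ?thesis .
qed

lemma rho_entries:
  fixes oc g :: "nat \<Rightarrow> real"
  assumes phi: "orthonormal_basis dO \<phi>" and xi: "orthonormal_basis dR xi"
    and \<sigma>: "bij_betw \<sigma> {..<dO * dR} ({..<dO} \<times> {..<dR})"
    and a: "a < dO*dR" and b: "b < dO*dR"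
  shows "tensor_mat (spec_sum dO oc \<phi>) (spec_sum dR g xi) $$ (a,b) =
    (\<Sum>n<dO*dR. complex_of_real (oc (fst (\<sigma> n)) * g (snd (\<sigma> n))) *
       (tensor_vec (\<phi> (fst (\<sigma> n))) (xi (snd (\<sigma> n))) $ a *
        cnj (tensor_vec (\<phi> (fst (\<sigma> n))) (xi (snd (\<sigma> n))) $ b)))"
proof -
  define G where "G = (\<lambda>(l,m). complex_of_real (oc l * g m) *
       (tensor_vec (\<phi> l) (xi m) $ a * cnj (tensor_vec (\<phi> l) (xi m) $ b)))"
  have dR0: "0 < dR" using a by (cases dR) auto
  have ad: "a div dR < dO" "b div dR < dO" using a b by (simp_all add: less_mult_imp_div_less)
  have am: "a mod dR < dR" "b mod dR < dR" using dR0 by auto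
  have "tensor_mat (spec_sum dO oc \<phi>) (spec_sum dR g xi) $$ (a,b) =
     (\<Sum>l<dO. complex_of_real (oc l) * (\<phi> l $ (a div dR) * cnj (\<phi> l $ (b div dR)))) *
     (\<Sum>m<dR. complex_of_real (g m) * (xi m $ (a mod dR) * cnj (xi m $ (b mod dR))))"
    using a b by (simp add: tensor_mat_def spec_sum_carrier[THEN carrier_matD(1)]
        spec_sum_carrier[THEN carrier_matD(2)] spec_sum_index[OF phi ad] spec_sum_index[OF xi am])
  also have "\<dots> = (\<Sum>l<dO. \<Sum>m<dR. G (l,m))"
    unfolding G_def using a b onb_dim[OF phi] onb_dim[OF xi]
    by (auto simp: sum_distrib_left sum_distrib_right tensor_vec_index mult_ac intro!: sum.cong)
  also have "\<dots> = (\<Sum>x\<in>{..<dO}\<times>{..<dR}. G x)" by (simp add: sum.cartesian_product)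
  also have "\<dots> = (\<Sum>n<dO*dR. G (\<sigma> n))" by (rule sum.reindex_bij_betw[OF \<sigma>, symmetric])
  finally show ?thesis by (simp add: G_def case_prod_beta)
qed

lemma psi_complete:
  assumes phi: "orthonormal_basis dO \<phi>" and xi: "orthonormal_basis dR xi"
    and \<sigma>: "bij_betw \<sigma> {..<dO * dR} ({..<dO} \<times> {..<dR})"
    and a: "a < dO*dR" and b: "b < dO*dR"
  shows "(\<Sum>n<dO*dR. cnj (tensor_vec (\<phi> (fst (\<sigma> n))) (xi (snd (\<sigma> n))) $ a) *
        tensor_vec (\<phi> (fst (\<sigma> n))) (xi (snd (\<sigma> n))) $ b) = (if a = b then 1 else 0)"
proof -
  define G where "G = (\<lambda>(l,m). cnj (tensor_vec (\<phi> l) (xi m) $ a) * tensor_vec (\<phi> l) (xi m) $ b)"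
  have dR0: "0 < dR" using a by (cases dR) auto
  have ad: "a div dR < dO" "b div dR < dO" using a b by (simp_all add: less_mult_imp_div_less)
  have am: "a mod dR < dR" "b mod dR < dR" using dR0 by auto
  have "(\<Sum>n<dO*dR. G (\<sigma> n)) = (\<Sum>x\<in>{..<dO}\<times>{..<dR}. G x)" by (rule sum.reindex_bij_betw[OF \<sigma>])
  also have "\<dots> = (\<Sum>l<dO. \<Sum>m<dR. G (l,m))" by (simp add: sum.cartesian_product)
  also have "\<dots> = (\<Sum>l<dO. cnj (\<phi> l $ (a div dR)) * \<phi> l $ (b div dR)) *
      (\<Sum>m<dR. cnj (xi m $ (a mod dR)) * xi m $ (b mod dR))"
  proof -
    have "(\<Sum>l<dO. \<Sum>m<dR. G (l,m)) = (\<Sum>l<dO. \<Sum>m<dR. (cnj (\<phi> l $ (a div dR)) * \<phi> l $ (b div dR)) *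
      (cnj (xi m $ (a mod dR)) * xi m $ (b mod dR)))"
      unfolding G_def using a b onb_dim[OF phi] onb_dim[OF xi]
      by (intro sum.cong refl) (simp add: tensor_vec_index mult_ac)
    then show ?thesis by (simp add: sum_product)
  qed
  also have "\<dots> = (if a = b then 1 else 0)"
    using onb_complete'[OF phi ad] onb_complete'[OF xi am] dR0
    by (auto) (metis div_mult_mod_eq)
  finally show ?thesis by (simp add: G_def case_prod_beta)
qed

lemma sum3_perm: "(\<Sum>b\<in>B. \<Sum>a\<in>A. \<Sum>n\<in>N. F a b n) = (\<Sum>n\<in>N. \<Sum>a\<in>A. \<Sum>b\<in>B. F a b n)"
proof -
  have "(\<Sum>b\<in>B. \<Sum>a\<in>A. \<Sum>n\<in>N. F a b n) = (\<Sum>a\<in>A. \<Sum>n\<in>N. \<Sum>b\<in>B. F a b n)"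
    by (subst sum.swap, rule sum.cong[OF refl], rule sum.swap)
  also have "\<dots> = (\<Sum>n\<in>N. \<Sum>a\<in>A. \<Sum>b\<in>B. F a b n)" by (rule sum.swap)
  finally show ?thesis .
qed

lemma sum3_perm2: "(\<Sum>b\<in>B. \<Sum>a\<in>A. \<Sum>n\<in>N. F a b n) = (\<Sum>n\<in>N. \<Sum>b\<in>B. \<Sum>a\<in>A. F a b n)"
proof -
  have "(\<Sum>b\<in>B. \<Sum>a\<in>A. \<Sum>n\<in>N. F a b n) = (\<Sum>b\<in>B. \<Sum>n\<in>N. \<Sum>a\<in>A. F a b n)"
    by (rule sum.cong[OF refl], rule sum.swap)
  also have "\<dots> = (\<Sum>n\<in>N. \<Sum>b\<in>B. \<Sum>a\<in>A. F a b n)" by (rule sum.swap)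
  finally show ?thesis .
qed

lemma conj_entries:
  fixes p :: "nat \<Rightarrow> real"
  assumes U: "U \<in> carrier_mat N N" and psi: "\<And>n. n < K \<Longrightarrow> \<psi> n \<in> carrier_vec N"
    and M: "M \<in> carrier_mat N N"
    and Me: "\<And>a b. a < N \<Longrightarrow> b < N \<Longrightarrow> M $$ (a,b) = (\<Sum>n<K. complex_of_real (p n) * (\<psi> n $ a * cnj (\<psi> n $ b)))"
    and i: "i < N" and j: "j < N"
  shows "(U * M * adj U) $$ (i,j) = (\<Sum>n<K. complex_of_real (p n) * ((U *\<^sub>v \<psi> n) $ i * cnj ((U *\<^sub>v \<psi> n) $ j)))"
proof -
  define Q where "Q a b n = complex_of_real (p n) * (U $$ (i,a) * \<psi> n $ a * (cnj (U $$ (j,b)) * cnj (\<psi> n $ b)))" for a b n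
  have "(U * M * adj U) $$ (i,j) = (\<Sum>b<N. (\<Sum>a<N. U $$ (i,a) * M $$ (a,b)) * cnj (U $$ (j,b)))"
    using U M i j by (auto simp: scalar_prod_def atLeast0LessThan intro!: sum.cong)
  also have "\<dots> = (\<Sum>b<N. \<Sum>a<N. \<Sum>n<K. Q a b n)"
    by (intro sum.cong refl) (simp add: Me Q_def sum_distrib_left sum_distrib_right mult_ac)
  also have "\<dots> = (\<Sum>n<K. \<Sum>b<N. \<Sum>a<N. Q a b n)" by (rule sum3_perm2)
  also have "\<dots> = (\<Sum>n<K. complex_of_real (p n) * ((U *\<^sub>v \<psi> n) $ i * cnj ((U *\<^sub>v \<psi> n) $ j)))"
  proof (intro sum.cong refl)
    fix n assume n: "n \<in> {..<K}"
    have "(U *\<^sub>v \<psi> n) $ i = (\<Sum>a<N. U $$ (i,a) * \<psi> n $ a)" "(U *\<^sub>v \<psi> n) $ j = (\<Sum>b<N. U $$ (j,b) * \<psi> n $ b)"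
      using U i j psi[of n] n by (auto simp: scalar_prod_def atLeast0LessThan intro!: sum.cong)
    then show "(\<Sum>b<N. \<Sum>a<N. Q a b n) = complex_of_real (p n) * ((U *\<^sub>v \<psi> n) $ i * cnj ((U *\<^sub>v \<psi> n) $ j))"
      by (simp add: Q_def sum_distrib_left sum_distrib_right cnj_sum mult_ac)
  qed
  finally show ?thesis .
qed

lemma mtrace_minus: "A \<in> carrier_mat d d \<Longrightarrow> B \<in> carrier_mat d d \<Longrightarrow> mtrace (A - B) = mtrace A - mtrace B"
  by (simp add: mtrace_def sum_subtractf)

lemma unit_norm:
  assumes U: "unitary_mat N U" and v: "v \<in> carrier_vec N"
  shows "(\<Sum>a<N. (cmod ((U *\<^sub>v v) $ a))^2) = (\<Sum>b<N. (cmod (v $ b))^2)"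
proof -
  have UU: "adj U * U = 1\<^sub>m N" and Uc: "U \<in> carrier_mat N N" using U by (auto simp: unitary_mat_def)
  have h: "(\<Sum>a<N. cnj (cnj (U $$ (a,b))) * cnj (U $$ (a,b'))) = (if b = b' then 1 else 0)"
    if "b < N" "b' < N" for b b'
  proof -
    have "(adj U * U) $$ (b',b) = 1\<^sub>m N $$ (b',b)" using UU by simp
    then show ?thesis using that Uc by (auto simp: scalar_prod_def atLeast0LessThan mult.commute)
  qed
  have "(\<Sum>a<N. (cmod (\<Sum>b<N. cnj (cnj (U $$ (a,b))) * v $ b))^2) = (\<Sum>b<N. (cmod (v $ b))^2)"
    by (rule parseval[where f="\<lambda>a b. cnj (U $$ (a,b))", OF h])
  moreover have "(U *\<^sub>v v) $ a = (\<Sum>b<N. cnj (cnj (U $$ (a,b))) * v $ b)" if "a < N" for a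
    using that Uc v by (auto simp: scalar_prod_def atLeast0LessThan)
  ultimately show ?thesis by simp
qed

lemma row_sum:
  assumes xi: "orthonormal_basis dR xi" and v: "v \<in> carrier_vec (dO*dR)"
  shows "(\<Sum>m<dR. Dw dO dR xi v m) = (\<Sum>a<dO*dR. (cmod (v $ a))^2)"
proof -
  have "(\<Sum>m<dR. Dw dO dR xi v m) = (\<Sum>k<dO. \<Sum>m<dR. (cmod (\<Sum>j<dR. cnj (xi m $ j) * v $ (k*dR+j)))^2)"
    unfolding Dw_def by (rule sum.swap)
  also have "\<dots> = (\<Sum>k<dO. \<Sum>j<dR. (cmod (v $ (k*dR+j)))^2)"
    by (intro sum.cong refl parseval onb_complete'[OF xi])
  also have "\<dots> = (\<Sum>a<dO*dR. (cmod (v $ a))^2)" by (rule sum_split_mult)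
  finally show ?thesis .
qed

lemma col_sum:
  assumes xi: "orthonormal_basis dR xi" and U: "unitary_mat (dO*dR) U"
    and psi: "\<And>n. n < dO*dR \<Longrightarrow> \<psi> n \<in> carrier_vec (dO*dR)"
    and psic: "\<And>a b. a < dO*dR \<Longrightarrow> b < dO*dR \<Longrightarrow> (\<Sum>n<dO*dR. cnj (\<psi> n $ a) * \<psi> n $ b) = (if a = b then 1 else 0)"
    and m: "m < dR"
  shows "(\<Sum>n<dO*dR. Dw dO dR xi (U *\<^sub>v \<psi> n) m) = real dO"
proof -
  define N where "N = dO*dR"
  have UU: "U * adj U = 1\<^sub>m N" and Uc: "U \<in> carrier_mat N N" using U by (auto simp: unitary_mat_def N_def)
  have "(\<Sum>n<N. Dw dO dR xi (U *\<^sub>v \<psi> n) m) = (\<Sum>k<dO. \<Sum>n<N. (cmod (\<Sum>j<dR. cnj (xi m $ j) * (U *\<^sub>v \<psi> n) $ (k*dR+j)))^2)"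
    unfolding Dw_def by (rule sum.swap)
  also have "\<dots> = (\<Sum>k<dO. 1)"
  proof (intro sum.cong refl)
    fix k assume k: "k \<in> {..<dO}"
    define w where "w b = (\<Sum>j<dR. cnj (U $$ (k*dR+j, b)) * xi m $ j)" for b
    have c: "cmod (\<Sum>j<dR. cnj (xi m $ j) * (U *\<^sub>v \<psi> n) $ (k*dR+j)) = cmod (\<Sum>b<N. cnj (\<psi> n $ b) * w b)"
      if n: "n < N" for n
    proof -
      have "(\<Sum>j<dR. cnj (xi m $ j) * (U *\<^sub>v \<psi> n) $ (k*dR+j)) = (\<Sum>j<dR. cnj (xi m $ j) * (\<Sum>b<N. U $$ (k*dR+j, b) * \<psi> n $ b))"
        using Uc psi[of n] n k idx_lt[of k dO _ dR] unfolding N_def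
        by (intro sum.cong refl) (auto simp: scalar_prod_def atLeast0LessThan intro!: sum.cong)
      also have "\<dots> = cnj (\<Sum>b<N. cnj (\<psi> n $ b) * w b)"
        unfolding w_def by (simp add: sum_distrib_left sum_distrib_right cnj_sum mult_ac) (rule sum.swap)
      finally show ?thesis by (metis complex_mod_cnj)
    qed
    have "(\<Sum>n<N. (cmod (\<Sum>j<dR. cnj (xi m $ j) * (U *\<^sub>v \<psi> n) $ (k*dR+j)))^2) = (\<Sum>n<N. (cmod (\<Sum>b<N. cnj (\<psi> n $ b) * w b))^2)"
      using c by simp
    also have "\<dots> = (\<Sum>b<N. (cmod (w b))^2)"
      by (rule parseval) (use psic in \<open>simp add: N_def\<close>)
    also have "\<dots> = (\<Sum>j<dR. (cmod (xi m $ j))^2)"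
      unfolding w_def
    proof (rule parseval[where f="\<lambda>b j. U $$ (k*dR+j, b)"])
      fix j j' assume jj: "j < dR" "j' < dR"
      have "(U * adj U) $$ (k*dR+j', k*dR+j) = 1\<^sub>m N $$ (k*dR+j', k*dR+j)" using UU by simp
      then show "(\<Sum>b<N. cnj (U $$ (k * dR + j, b)) * U $$ (k * dR + j', b)) = (if j = j' then 1 else 0)"
        using jj k Uc idx_lt[of k dO _ dR] unfolding N_def
        by (auto simp: scalar_prod_def atLeast0LessThan mult.commute)
    qed
    also have "\<dots> = 1" by (rule onb_norm[OF xi m])
    finally show "(\<Sum>n<N. (cmod (\<Sum>j<dR. cnj (xi m $ j) * (U *\<^sub>v \<psi> n) $ (k*dR+j)))^2) = 1" .
  qed
  finally show ?thesis by (simp add: N_def)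
qed

lemma Dw_tensor:
  assumes xi: "orthonormal_basis dR xi" and ph: "orthonormal_basis dO \<phi>m"
    and l: "l < dO" and m': "m' < dR" and m: "m < dR"
  shows "Dw dO dR xi (tensor_vec (\<phi>m l) (xi m')) m = (if m = m' then 1 else 0)"
proof -
  have "Dw dO dR xi (tensor_vec (\<phi>m l) (xi m')) m =
     (\<Sum>k<dO. (cmod (\<phi>m l $ k * (\<Sum>j<dR. cnj (xi m $ j) * xi m' $ j)))^2)"
    unfolding Dw_def
  proof (intro sum.cong refl arg_cong[where f="\<lambda>x. (cmod x)^2"])
    fix k assume k: "k \<in> {..<dO}"
    show "(\<Sum>j<dR. cnj (xi m $ j) * tensor_vec (\<phi>m l) (xi m') $ (k * dR + j)) =
      \<phi>m l $ k * (\<Sum>j<dR. cnj (xi m $ j) * xi m' $ j)"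
      using onb_dim[OF xi m'] onb_dim[OF ph l] k idx_lt[of k dO _ dR]
      by (auto simp: tensor_vec_index sum_distrib_left mult_ac intro!: sum.cong)
  qed
  also have "\<dots> = (\<Sum>k<dO. (cmod (\<phi>m l $ k))^2) * (if m = m' then 1 else 0)"
    by (simp add: onb_inner[OF xi m m'] sum_distrib_right norm_mult power_mult_distrib)
  also have "\<dots> = (if m = m' then 1 else 0)" using onb_norm[OF ph l] by simp
  finally show ?thesis .
qed




theorem lemma3:
  fixes dO dR :: nat
    and lam :: "nat \<Rightarrow> real" and xi :: "nat \<Rightarrow> complex vec" and \<beta> :: real
    and oc :: "nat \<Rightarrow> real" and \<phi> :: "nat \<Rightarrow> complex vec"
    and \<sigma> :: "nat \<Rightarrow> nat \<times> nat"
    and Umaj :: "complex mat"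
    and HR rhoR rhoO rho :: "complex mat"
  assumes dO: "dO \<ge> 1" and dR: "dR \<ge> 1"
    and xi_onb: "orthonormal_basis dR xi"
    and lam_sorted: "\<And>m m'. m \<le> m' \<Longrightarrow> m' < dR \<Longrightarrow> lam m \<le> lam m'"
    and HR_def: "HR = spec_sum dR lam xi"
    and beta: "\<beta> > 0"
    and rhoR_def: "rhoR = spec_sum dR (gibbs_weights dR \<beta> lam) xi"
    and phi_onb: "orthonormal_basis dO \<phi>"
    and o_nonneg: "\<And>l. l < dO \<Longrightarrow> oc l \<ge> 0"
    and o_sum: "(\<Sum>l<dO. oc l) = 1"
    and o_sorted: "\<And>l l'. l \<le> l' \<Longrightarrow> l' < dO \<Longrightarrow> oc l' \<le> oc l"
    and rhoO_def: "rhoO = spec_sum dO oc \<phi>"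
    and rho_def: "rho = tensor_mat rhoO rhoR"
    and \<sigma>_bij: "bij_betw \<sigma> {..<dO * dR} ({..<dO} \<times> {..<dR})"
    and p_sorted: "\<And>n n'. n \<le> n' \<Longrightarrow> n' < dO * dR \<Longrightarrow>
        oc (fst (\<sigma> n')) * gibbs_weights dR \<beta> lam (snd (\<sigma> n'))
        \<le> oc (fst (\<sigma> n)) * gibbs_weights dR \<beta> lam (snd (\<sigma> n))"
    and Umaj_unitary: "unitary_mat (dO * dR) Umaj"
    and Umaj_action: "\<forall>m<dR. \<exists>\<phi>m. orthonormal_basis dO \<phi>m \<and>
        (\<forall>l<dO. Umaj *\<^sub>v tensor_vec (\<phi> (fst (\<sigma> (m * dO + l)))) (xi (snd (\<sigma> (m * dO + l))))
               = tensor_vec (\<phi>m l) (xi m))"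
  shows "\<forall>U. unitary_mat (dO * dR) U \<longrightarrow>
           heat dO dR HR rhoR rho Umaj \<le> heat dO dR HR rhoR rho U"
proof (intro allI impI)
  fix U assume U: "unitary_mat (dO * dR) U"
  define N where "N = dO*dR"
  define g where "g = gibbs_weights dR \<beta> lam"
  define p where "p n = oc (fst (\<sigma> n)) * g (snd (\<sigma> n))" for n
  define \<psi> where "\<psi> n = tensor_vec (\<phi> (fst (\<sigma> n))) (xi (snd (\<sigma> n)))" for n
  have sig: "fst (\<sigma> n) < dO" "snd (\<sigma> n) < dR" if "n < N" for n
    using bij_betw_apply[OF \<sigma>_bij, of n] that unfolding N_def by auto
  have psi_car: "\<psi> n \<in> carrier_vec N" if "n < N" for n
  proof -
    have "dim_vec (\<psi> n) = dim_vec (\<phi> (fst (\<sigma> n))) * dim_vec (xi (snd (\<sigma> n)))"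
      unfolding \<psi>_def by (rule tensor_vec_index(2))
    also have "\<dots> = dO*dR"
      by (simp only: onb_dim[OF phi_onb sig(1)[OF that]] onb_dim[OF xi_onb sig(2)[OF that]])
    finally show ?thesis unfolding N_def by (rule carrier_vecI)
  qed
  have rho_car: "rho \<in> carrier_mat N N"
    unfolding rho_def rhoO_def rhoR_def tensor_mat_def N_def
    using spec_sum_carrier[of dO oc \<phi>] spec_sum_carrier[of dR "gibbs_weights dR \<beta> lam" xi] by auto
  have rhoe: "rho $$ (a,b) = (\<Sum>n<N. complex_of_real (p n) * (\<psi> n $ a * cnj (\<psi> n $ b)))"
    if "a < N" "b < N" for a b
    unfolding rho_def rhoO_def rhoR_def p_def \<psi>_def g_def N_def
    by (rule rho_entries[OF phi_onb xi_onb \<sigma>_bij]) (use that in \<open>auto simp: N_def\<close>)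
  have HRc: "HR \<in> carrier_mat dR dR" "rhoR \<in> carrier_mat dR dR"
    by (simp_all add: HR_def rhoR_def spec_sum_carrier)
  have heat_eq: "heat dO dR HR rhoR rho V =
      (\<Sum>n<N. p n * (\<Sum>m<dR. lam m * Dw dO dR xi (V *\<^sub>v \<psi> n) m)) - Re (mtrace (HR * rhoR))"
    if V: "unitary_mat (dO*dR) V" for V
  proof -
    have Vc: "V \<in> carrier_mat N N" using V by (simp add: unitary_mat_def N_def)
    have Pc: "ptrace_O dO dR (V * rho * adj V) \<in> carrier_mat dR dR" by (simp add: ptrace_O_def)
    have "mtrace (HR * (ptrace_O dO dR (V * rho * adj V) - rhoR)) =
        mtrace (HR * ptrace_O dO dR (V * rho * adj V)) - mtrace (HR * rhoR)"
      by (simp add: mult_minus_distrib_mat[OF HRc(1) Pc HRc(2)] mtrace_minus[of _ dR]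
          mult_carrier_mat[OF HRc(1) Pc] mult_carrier_mat[OF HRc(1) HRc(2)])
    moreover have "mtrace (HR * ptrace_O dO dR (V * rho * adj V)) =
        complex_of_real (\<Sum>n<N. p n * (\<Sum>m<dR. lam m * Dw dO dR xi (V *\<^sub>v \<psi> n) m))"
      unfolding HR_def
    proof (rule trace_formula[OF xi_onb])
      fix a b assume ab: "a < dO*dR" "b < dO*dR"
      show "(V * rho * adj V) $$ (a, b) = (\<Sum>n<N. complex_of_real (p n) * ((V *\<^sub>v \<psi> n) $ a * cnj ((V *\<^sub>v \<psi> n) $ b)))"
        by (rule conj_entries[OF Vc psi_car rho_car rhoe]) (use ab in \<open>auto simp: N_def\<close>)
    qed
    ultimately show ?thesis unfolding heat_def by simp
  qed
  have maj: "(\<Sum>m<dR. lam m * Dw dO dR xi (Umaj *\<^sub>v \<psi> n) m) = lam (n div dO)" if n: "n < N" for n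
  proof -
    define m' where "m' = n div dO"
    define l where "l = n mod dO"
    have m': "m' < dR" using n dO unfolding m'_def N_def by (simp add: less_mult_imp_div_less mult.commute)
    have l: "l < dO" using dO unfolding l_def by simp
    have nn: "n = m' * dO + l" unfolding m'_def l_def by simp
    obtain \<phi>m where ph: "orthonormal_basis dO \<phi>m" and act: "\<forall>l<dO. Umaj *\<^sub>v tensor_vec (\<phi> (fst (\<sigma> (m' * dO + l)))) (xi (snd (\<sigma> (m' * dO + l))))
               = tensor_vec (\<phi>m l) (xi m')"
      using Umaj_action m' by blast
    have "Umaj *\<^sub>v \<psi> n = tensor_vec (\<phi>m l) (xi m')" using act l nn unfolding \<psi>_def by metis
    then have "(\<Sum>m<dR. lam m * Dw dO dR xi (Umaj *\<^sub>v \<psi> n) m) = (\<Sum>m<dR. lam m * (if m = m' then 1 else 0))"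
      using Dw_tensor[OF xi_onb ph l m'] by simp
    also have "\<dots> = lam m'" using m' by (simp add: if_distrib cong: if_cong)
    finally show ?thesis by (simp add: m'_def)
  qed
  have psi_norm: "(\<Sum>a<N. (cmod (\<psi> n $ a))^2) = 1" if n: "n < N" for n
  proof -
    have "(\<Sum>a<N. (cmod (\<psi> n $ a))^2) = (\<Sum>k<dO. \<Sum>j<dR. (cmod (\<psi> n $ (k*dR+j)))^2)"
      unfolding N_def by (rule sum_split_mult[symmetric])
    also have "\<dots> = (\<Sum>k<dO. \<Sum>j<dR. (cmod (\<phi> (fst (\<sigma> n)) $ k))^2 * (cmod (xi (snd (\<sigma> n)) $ j))^2)"
      using sig[OF n] onb_dim[OF phi_onb] onb_dim[OF xi_onb] idx_lt[of _ dO _ dR]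
      by (intro sum.cong refl) (simp add: \<psi>_def tensor_vec_index norm_mult power_mult_distrib)
    also have "\<dots> = 1"
      by (simp add: sum_distrib_left[symmetric] onb_norm[OF xi_onb sig(2)[OF n]] onb_norm[OF phi_onb sig(1)[OF n]])
    finally show ?thesis .
  qed
  have comb: "(\<Sum>n<dO*dR. p n * lam (n div dO)) \<le> (\<Sum>n<dO*dR. p n * (\<Sum>m<dR. lam m * Dw dO dR xi (U *\<^sub>v \<psi> n) m))"
  proof (rule comb_main[OF dO dR lam_sorted])
    show "p n' \<le> p n" if "n \<le> n'" "n' < dO * dR" for n n'
      using p_sorted[OF that] by (simp add: p_def g_def)
    show "0 \<le> Dw dO dR xi (U *\<^sub>v \<psi> n) m" for n m by (simp add: Dw_def sum_nonneg)
    show "(\<Sum>m<dR. Dw dO dR xi (U *\<^sub>v \<psi> n) m) = 1" if n: "n < dO * dR" for n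
    proof -
      have Uc: "U \<in> carrier_mat (dO*dR) (dO*dR)" using U by (simp add: unitary_mat_def)
      have "U *\<^sub>v \<psi> n \<in> carrier_vec (dO*dR)"
        by (rule mult_mat_vec_carrier[OF Uc]) (use psi_car[of n] n in \<open>simp add: N_def\<close>)
      moreover have "\<psi> n \<in> carrier_vec (dO*dR)" using psi_car[of n] n by (simp add: N_def)
      ultimately show ?thesis using row_sum[OF xi_onb] unit_norm[OF U] psi_norm[of n] n unfolding N_def by simp
    qed
    show "(\<Sum>n<dO * dR. Dw dO dR xi (U *\<^sub>v \<psi> n) m) = real dO" if m: "m < dR" for m
      by (rule col_sum[OF xi_onb U _ _ m]) (use psi_car psi_complete[OF phi_onb xi_onb \<sigma>_bij] in \<open>auto simp: \<psi>_def N_def\<close>)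
  qed
  have "heat dO dR HR rhoR rho Umaj = (\<Sum>n<N. p n * lam (n div dO)) - Re (mtrace (HR * rhoR))"
    using heat_eq[OF Umaj_unitary] maj by simp
  also have "\<dots> \<le> heat dO dR HR rhoR rho U" using heat_eq[OF U] comb unfolding N_def by simp
  finally show "heat dO dR HR rhoR rho Umaj \<le> heat dO dR HR rhoR rho U" .
qed

end
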